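(* For all real $t\neq 0$, \[ \frac{\pi^2+\left(4-\frac{\pi^2}{3}\right)t^2-\left(\frac43-\frac{128}{\pi^4}\right)t^4}{\pi^2+4t^2}<\frac{\tanh t}{t}<\frac{\pi^2+\left(4-\frac{\pi^2}{3}\right)t^2-\left(\frac43-\frac{2\pi^2}{15}\right)t^4+\left(\frac{8}{15}-\frac{512}{\pi^6}\right)t^6}{\pi^2+4t^2}. \] *)

theory Defs
  imports Complex_Main
begin

end

theory Submission
  imports Defs "HOL-Analysis.Complex_Transcendental"
begin

definition SS :: "real \<Rightarrow> nat \<Rightarrow> nat \<Rightarrow> real" where
  "SS t j n = (if n < j then 0 else if even (n - j) then 0 else t^n / fact (n-j))"
definition CC :: "real \<Rightarrow> nat \<Rightarrow> nat \<Rightarrow> real" where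
  "CC t j n = (if n < j then 0 else if even (n - j) then t^n / fact (n-j) else 0)"

lemma shift_sums:
  fixes g :: "nat \<Rightarrow> real"
  assumes "(\<lambda>i. g (i + j)) sums s" "\<And>i. i < j \<Longrightarrow> g i = 0"
  shows "g sums s"
proof -
  have "(\<Sum>i<j. g i) = 0" using assms(2) by simp
  with assms(1) sums_iff_shift[of g j s] show ?thesis by simp
qed

lemma SS_sums: "SS t j sums (t^j * sinh t)"
proof (rule shift_sums)
  have "(\<lambda>n. t^j * (if even n then 0 else t ^ n /\<^sub>R fact n)) sums (t^j * sinh t)"
    by (rule sums_mult[OF sinh_converges])
  moreover have "(\<lambda>i. SS t j (i + j)) = (\<lambda>n. t^j * (if even n then 0 else t ^ n /\<^sub>R fact n))"
    by (auto simp: SS_def power_add divide_inverse scaleR_conv_of_real mult.commute)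
  ultimately show "(\<lambda>i. SS t j (i + j)) sums (t^j * sinh t)" by simp
qed (simp add: SS_def)

lemma CC_sums: "CC t j sums (t^j * cosh t)"
proof (rule shift_sums)
  have "(\<lambda>n. t^j * (if even n then t ^ n /\<^sub>R fact n else 0)) sums (t^j * cosh t)"
    by (rule sums_mult[OF cosh_converges])
  moreover have "(\<lambda>i. CC t j (i + j)) = (\<lambda>n. t^j * (if even n then t ^ n /\<^sub>R fact n else 0))"
    by (auto simp: CC_def power_add divide_inverse scaleR_conv_of_real mult.commute)
  ultimately show "(\<lambda>i. CC t j (i + j)) sums (t^j * cosh t)" by simp
qed (simp add: CC_def)

lemma facts:
  "fact (k+9) = (real k+9)*(real k+8)*(real k+7)*(real k+6)*(real k+5)*(real k+4)*(real k+3)*(fact (k+2)::real)"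
  "fact (k+8) = (real k+8)*(real k+7)*(real k+6)*(real k+5)*(real k+4)*(real k+3)*(fact (k+2)::real)"
  "fact (k+7) = (real k+7)*(real k+6)*(real k+5)*(real k+4)*(real k+3)*(fact (k+2)::real)"
  "fact (k+6) = (real k+6)*(real k+5)*(real k+4)*(real k+3)*(fact (k+2)::real)"
  "fact (k+5) = (real k+5)*(real k+4)*(real k+3)*(fact (k+2)::real)"
  "fact (k+4) = (real k+4)*(real k+3)*(fact (k+2)::real)"
  "fact (k+3) = (real k+3)*(fact (k+2)::real)"
  by (simp_all add: numeral_eq_Suc add_Suc_right algebra_simps)

lemma pi_bounds: "pi^2 \<ge> (9869604401/1000000000)" "1/pi^4 \<le> (102659822552/10000000000000)" "1/pi^6 \<le> (10401614734/10000000000000)"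
proof -
  have lo: "pi \<ge> (3141592653588/1000000000000)" using pi_approx by simp
  have "pi^2 \<ge> (3141592653588/1000000000000)^2" by (rule power_mono[OF lo]) simp
  moreover have "((3141592653588/1000000000000)::real)^2 \<ge> (9869604401/1000000000)" by (simp add: power_divide)
  ultimately show q: "pi^2 \<ge> (9869604401/1000000000)" by linarith
  have "(pi^2)^2 \<ge> (9869604401/1000000000)^2" by (rule power_mono[OF q]) simp
  moreover have "((9869604401/1000000000)::real)^2 \<ge> (9740909103/100000000)" by (simp add: power_divide)
  ultimately have p4: "pi^4 \<ge> (9740909103/100000000)" by simp
  have "1/pi^4 \<le> 1/(9740909103/100000000)"
    by (rule divide_left_mono[OF p4]) auto
  moreover have "1/(9740909103/100000000) \<le> ((102659822552/10000000000000)::real)" by simp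
  ultimately show "1/pi^4 \<le> (102659822552/10000000000000)" by (rule order_trans)
  have "(pi^2)^3 \<ge> (9869604401/1000000000)^3" by (rule power_mono[OF q]) simp
  moreover have "((9869604401/1000000000)::real)^3 \<ge> (9613891935/10000000)" by (simp add: power_divide)
  ultimately have p6: "pi^6 \<ge> (9613891935/10000000)" by simp
  have "1/pi^6 \<le> 1/(9613891935/10000000)"
    by (rule divide_left_mono[OF p6]) auto
  moreover have "1/(9613891935/10000000) \<le> ((10401614734/10000000000000)::real)" by simp
  ultimately show "1/pi^6 \<le> (10401614734/10000000000000)" by (rule order_trans)
qed

definition TL :: "real \<Rightarrow> real \<Rightarrow> real \<Rightarrow> nat \<Rightarrow> real" where
  "TL t q b n = q * SS t 0 n + 4 * SS t 2 n - q * CC t 1 n - (4 - q/3) * CC t 3 n + b * CC t 5 n"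

lemma TL_sums: "TL t q b sums (q* sinh t + 4*(t^2* sinh t) - q*(t* cosh t) - (4 - q/3)*(t^3* cosh t) + b*(t^5* cosh t))"
proof -
  have "(\<lambda>n. q * SS t 0 n + 4 * SS t 2 n - q * CC t 1 n - (4 - q/3) * CC t 3 n + b * CC t 5 n) sums
     (q*(t^0* sinh t) + 4*(t^2* sinh t) - q*(t^1* cosh t) - (4 - q/3)*(t^3* cosh t) + b*(t^5* cosh t))"
    by (intro sums_add sums_diff sums_mult SS_sums CC_sums)
  moreover have "TL t q b = (\<lambda>n. q * SS t 0 n + 4 * SS t 2 n - q * CC t 1 n - (4 - q/3) * CC t 3 n + b * CC t 5 n)"
    by (rule ext) (simp add: TL_def)
  ultimately show ?thesis by simp
qed

lemma TL_big:
  fixes t q b :: real and k :: nat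
  assumes "even k"
  shows "TL t q b (k+7)
    = t^(k+7) / fact (k+7) * (q + 4*(real k+7)*(real k+6) - q*(real k+7) - (4 - q/3)*(real k+7)*(real k+6)*(real k+5)
     + b*(real k+7)*(real k+6)*(real k+5)*(real k+4)*(real k+3))"
proof -
  have e: "SS t 0 (k+7) = t^(k+7)/fact (k+7)" "SS t 2 (k+7) = t^(k+7)/fact (k+5)"
    "CC t 1 (k+7) = t^(k+7)/fact (k+6)" "CC t 3 (k+7) = t^(k+7)/fact (k+4)"
    "CC t 5 (k+7) = t^(k+7)/fact (k+2)"
    using assms by (simp_all add: SS_def CC_def add.commute)
  define F :: real where "F = fact (k+2)"
  have F: "F > 0" unfolding F_def by simp
  define x where "x = real k"
  have x: "x \<ge> 0" unfolding x_def by simp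
  show ?thesis
    unfolding TL_def e facts F_def[symmetric] x_def[symmetric] using F x
    by (simp add: field_simps add_nonneg_eq_0_iff)
qed

lemma polyL:
  fixes x q r :: real
  shows "q + 4*(x+7)*(x+6) - q*(x+7) - (4 - q/3)*(x+7)*(x+6)*(x+5)
     + (4/3 - 128*r)*(x+7)*(x+6)*(x+5)*(x+4)*(x+3)
   = (2688 + 64*q - 322560*r) + (3296 + 104/3*q - 352512*r)*x + (4496/3 + 6*q - 150400*r)*x^2
     + (968/3 + q/3 - 31360*r)*x^3 + (100/3 - 3200*r)*x^4 + (4/3 - 128*r)*x^5"
  apply (simp add: field_simps)
  apply (simp add: algebra_simps power2_eq_square power3_eq_cube power4_eq_xxxx numeral_eq_Suc)
  done

lemma TL_pos:
  assumes t: "t > 0" and q: "q \<ge> (9869604401/1000000000)" and r: "r \<le> (102659822552/10000000000000)"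
  shows "TL t q (4/3 - 128*r) n \<ge> 0" "TL t q (4/3 - 128*r) 5 > 0"
proof -
  show "TL t q (4/3 - 128*r) 5 > 0"
  proof -
    have eq: "TL t q (4/3 - 128*r) 5 = t^5 * (16*q - 15360*r) / 120"
      by (simp add: TL_def SS_def CC_def fact_numeral field_simps)
    have "16*q - 15360*r > 0" using q r by linarith
    then show ?thesis unfolding eq using t by simp
  qed
  show "TL t q (4/3 - 128*r) n \<ge> 0"
  proof (cases "even n")
    case True
    then have "TL t q (4/3 - 128*r) n = 0" by (auto simp: TL_def SS_def CC_def)
    then show ?thesis by simp
  next
    case False
    show ?thesis
    proof (cases "n < 7")
      case True
      with False have "n = 1 \<or> n = 3 \<or> n = 5" by presburger
      moreover have "TL t q (4/3 - 128*r) 1 = 0" "TL t q (4/3 - 128*r) 3 = 0"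
        by (simp_all add: TL_def SS_def CC_def fact_numeral field_simps)
      moreover have "TL t q (4/3 - 128*r) 5 > 0" by fact
      ultimately show ?thesis by auto
    next
      case False2: False
      define k where "k = n - 7"
      have n: "n = k + 7" and k: "even k" using False False2 unfolding k_def by presburger+
      define x where "x = real k"
      have x: "x \<ge> 0" unfolding x_def by simp
      have P: "0 \<le> (2688 + 64*q - 322560*r) + (3296 + 104/3*q - 352512*r)*x + (4496/3 + 6*q - 150400*r)*x^2
     + (968/3 + q/3 - 31360*r)*x^3 + (100/3 - 3200*r)*x^4 + (4/3 - 128*r)*x^5"
      proof -
        have c: "0 \<le> 2688 + 64*q - 322560*r" "0 \<le> 3296 + 104/3*q - 352512*r" "0 \<le> 4496/3 + 6*q - 150400*r"
          "0 \<le> 968/3 + q/3 - 31360*r" "0 \<le> 100/3 - 3200*r" "0 \<le> 4/3 - 128*r"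
          using q r by linarith+
        show ?thesis using c x by (intro add_nonneg_nonneg mult_nonneg_nonneg zero_le_power) auto
      qed
      show ?thesis unfolding n TL_big[OF k] x_def[symmetric] polyL
        using P t by simp
    qed
  qed
qed

definition TU :: "real \<Rightarrow> real \<Rightarrow> real \<Rightarrow> real \<Rightarrow> nat \<Rightarrow> real" where
  "TU t q a d n = q * CC t 1 n + (4 - q/3) * CC t 3 n - a * CC t 5 n + d * CC t 7 n - q * SS t 0 n - 4 * SS t 2 n"

lemma TU_sums: "TU t q a d sums (q*(t * cosh t) + (4 - q/3)*(t^3 * cosh t) - a*(t^5 * cosh t) + d*(t^7 * cosh t) - q * sinh t - 4*(t^2 * sinh t))"
proof -
  have "(\<lambda>n. q * CC t 1 n + (4 - q/3) * CC t 3 n - a * CC t 5 n + d * CC t 7 n - q * SS t 0 n - 4 * SS t 2 n) sums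
     (q*(t^1 * cosh t) + (4 - q/3)*(t^3 * cosh t) - a*(t^5 * cosh t) + d*(t^7 * cosh t) - q*(t^0 * sinh t) - 4*(t^2 * sinh t))"
    by (intro sums_add sums_diff sums_mult SS_sums CC_sums)
  moreover have "TU t q a d = (\<lambda>n. q * CC t 1 n + (4 - q/3) * CC t 3 n - a * CC t 5 n + d * CC t 7 n - q * SS t 0 n - 4 * SS t 2 n)"
    by (rule ext) (simp add: TU_def)
  ultimately show ?thesis by simp
qed

lemma lin6: "c1*(A*f1) + c3*(A*f3) - c5*(A*f5) + c7*(A*f7) - c0*(A*1) - c2*(A*f2)
   = A*(c1*f1 + c3*f3 - c5*f5 + c7*f7 - c0 - c2*f2)" for A :: real
  by (simp add: algebra_simps)

lemma TU_big:
  fixes t q a d :: real and k :: nat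
  assumes "even k"
  shows "TU t q a d (k+9)
    = t^(k+9) / fact (k+9) * (q*(real k+9) + (4 - q/3)*((real k+9)*(real k+8)*(real k+7))
     - a*((real k+9)*(real k+8)*(real k+7)*(real k+6)*(real k+5))
     + d*((real k+9)*(real k+8)*(real k+7)*(real k+6)*(real k+5)*(real k+4)*(real k+3))
     - q - 4*((real k+9)*(real k+8)))"
proof -
  have e: "SS t 0 (k+9) = t^(k+9)/fact (k+9)" "SS t 2 (k+9) = t^(k+9)/fact (k+7)"
    "CC t 1 (k+9) = t^(k+9)/fact (k+8)" "CC t 3 (k+9) = t^(k+9)/fact (k+6)"
    "CC t 5 (k+9) = t^(k+9)/fact (k+4)" "CC t 7 (k+9) = t^(k+9)/fact (k+2)"
    using assms by (simp_all add: SS_def CC_def add.commute)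
  define F :: real where "F = fact (k+2)"
  have F: "F > 0" unfolding F_def by simp
  define x where "x = real k"
  have x: "x \<ge> 0" unfolding x_def by simp
  define A where "A = t^(k+9) / fact (k+9)"
  have A: "A = t^(k+9) / ((x+9)*(x+8)*(x+7)*(x+6)*(x+5)*(x+4)*(x+3)*F)"
    unfolding A_def facts F_def x_def ..
  have nz: "(x+9)*(x+8)*(x+7)*(x+6)*(x+5)*(x+4)*(x+3) \<noteq> 0" using x by (simp add: add_nonneg_eq_0_iff)
  have e': "SS t 0 (k+9) = A*1" "SS t 2 (k+9) = A*((x+9)*(x+8))"
    "CC t 1 (k+9) = A*(x+9)" "CC t 3 (k+9) = A*((x+9)*(x+8)*(x+7))"
    "CC t 5 (k+9) = A*((x+9)*(x+8)*(x+7)*(x+6)*(x+5))"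
    "CC t 7 (k+9) = A*((x+9)*(x+8)*(x+7)*(x+6)*(x+5)*(x+4)*(x+3))"
    unfolding A e facts F_def[symmetric] x_def[symmetric] using F nz
    by (simp_all add: divide_simps)
  show ?thesis
    unfolding TU_def e' A_def[symmetric] x_def[symmetric] by (rule lin6)
qed

lemma polyU:
  fixes x q s :: real
  shows "q*(x+9) + (4 - q/3)*((x+9)*(x+8)*(x+7))
     - (4/3 - 2*q/15)*((x+9)*(x+8)*(x+7)*(x+6)*(x+5))
     + (8/15 - 512* s)*((x+9)*(x+8)*(x+7)*(x+6)*(x+5)*(x+4)*(x+3))
     - q - 4*((x+9)*(x+8))
   = (78336 + 1856*q - 92897280* s) + (571328/5 + 21608/15*q - 123457536* s)*x + (1006384/15 + 1306/3*q - 68576256* s)*x^2 + (313312/15 + 193/3*q - 20668928* s)*x^3 + (11284/3 + 14/3*q - 3655680* s)*x^4 + (1972/5 + 2/15*q - 379904* s)*x^5 + (112/5 - 21504* s)*x^6 + (8/15 - 512* s)*x^7"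
  apply (simp add: field_simps)
  apply (simp add: algebra_simps power2_eq_square power3_eq_cube power4_eq_xxxx numeral_eq_Suc)
  done

lemma TU_pos:
  assumes t: "t > 0" and q: "q \<ge> (9869604401/1000000000)" and s: "s \<le> (10401614734/10000000000000)"
  shows "TU t q (4/3 - 2*q/15) (8/15 - 512* s) n \<ge> 0" "TU t q (4/3 - 2*q/15) (8/15 - 512* s) 7 > 0"
proof -
  show "TU t q (4/3 - 2*q/15) (8/15 - 512* s) 7 > 0"
  proof -
    have eq: "TU t q (4/3 - 2*q/15) (8/15 - 512* s) 7 = t^7 * (272*q - 2580480* s) / 5040"
      by (simp add: TU_def SS_def CC_def fact_numeral field_simps)
    have "272*q - 2580480* s > 0" using q s by linarith
    then show ?thesis unfolding eq using t by simp
  qed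
  show "TU t q (4/3 - 2*q/15) (8/15 - 512* s) n \<ge> 0"
  proof (cases "even n")
    case True
    then have "TU t q (4/3 - 2*q/15) (8/15 - 512* s) n = 0" by (auto simp: TU_def SS_def CC_def)
    then show ?thesis by simp
  next
    case False
    show ?thesis
    proof (cases "n < 9")
      case True
      with False have "n = 1 \<or> n = 3 \<or> n = 5 \<or> n = 7" by presburger
      moreover have "TU t q (4/3 - 2*q/15) (8/15 - 512* s) 1 = 0" "TU t q (4/3 - 2*q/15) (8/15 - 512* s) 3 = 0"
        "TU t q (4/3 - 2*q/15) (8/15 - 512* s) 5 = 0"
        by (simp_all add: TU_def SS_def CC_def fact_numeral field_simps)
      moreover have "TU t q (4/3 - 2*q/15) (8/15 - 512* s) 7 > 0" by fact
      ultimately show ?thesis by auto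
    next
      case False2: False
      define k where "k = n - 9"
      have n: "n = k + 9" and k: "even k" using False False2 unfolding k_def by presburger+
      define x where "x = real k"
      have x: "x \<ge> 0" unfolding x_def by simp
      have P: "0 \<le> (78336 + 1856*q - 92897280* s) + (571328/5 + 21608/15*q - 123457536* s)*x + (1006384/15 + 1306/3*q - 68576256* s)*x^2 + (313312/15 + 193/3*q - 20668928* s)*x^3 + (11284/3 + 14/3*q - 3655680* s)*x^4 + (1972/5 + 2/15*q - 379904* s)*x^5 + (112/5 - 21504* s)*x^6 + (8/15 - 512* s)*x^7"
      proof -
        have c: "0 \<le> (78336 + 1856*q - 92897280* s)"
          "0 \<le> (571328/5 + 21608/15*q - 123457536* s)"
          "0 \<le> (1006384/15 + 1306/3*q - 68576256* s)"
          "0 \<le> (313312/15 + 193/3*q - 20668928* s)"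
          "0 \<le> (11284/3 + 14/3*q - 3655680* s)"
          "0 \<le> (1972/5 + 2/15*q - 379904* s)"
          "0 \<le> (112/5 - 21504* s)"
          "0 \<le> (8/15 - 512* s)"
          using q s by linarith+
        show ?thesis using c x by (intro add_nonneg_nonneg mult_nonneg_nonneg zero_le_power) auto
      qed
      show ?thesis unfolding n TU_big[OF k] x_def[symmetric] polyU
        using P t by simp
    qed
  qed
qed

lemma main_pos:
  fixes t :: real
  assumes t: "t > 0"
  shows "(pi^2 + (4 - pi^2/3) * t^2 - (4/3 - 128/pi^4) * t^4) / (pi^2 + 4*t^2) < tanh t / t
       \<and> tanh t / t < (pi^2 + (4 - pi^2/3) * t^2 - (4/3 - 2*pi^2/15) * t^4 + (8/15 - 512/pi^6) * t^6) / (pi^2 + 4*t^2)"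
proof -
  define q where "q = pi^2"
  define r where "r = 1/pi^4"
  define s where "s = 1/pi^6"
  have q: "q \<ge> (9869604401/1000000000)" and r: "r \<le> (102659822552/10000000000000)"
    and s: "s \<le> (10401614734/10000000000000)"
    using pi_bounds unfolding q_def r_def s_def by auto
  have ch: "cosh t > 0" by simp
  have D: "pi^2 + 4*t^2 > 0" by (simp add: add_pos_nonneg)
  have HL: "0 < q * sinh t + 4*(t^2 * sinh t) - q*(t * cosh t) - (4 - q/3)*(t^3 * cosh t) + (4/3 - 128*r)*(t^5 * cosh t)"
  proof -
    have "0 < suminf (TL t q (4/3 - 128*r))"
      using TL_pos[OF t q r] by (intro suminf_pos2[of _ 5]) (auto intro: sums_summable[OF TL_sums])
    then show ?thesis using TL_sums[of t q "4/3 - 128*r"] by (simp add: sums_iff)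
  qed
  have HU: "0 < q*(t * cosh t) + (4 - q/3)*(t^3 * cosh t) - (4/3 - 2*q/15)*(t^5 * cosh t) + (8/15 - 512* s)*(t^7 * cosh t) - q * sinh t - 4*(t^2 * sinh t)"
  proof -
    have "0 < suminf (TU t q (4/3 - 2*q/15) (8/15 - 512* s))"
      using TU_pos[OF t q s] by (intro suminf_pos2[of _ 7]) (auto intro: sums_summable[OF TU_sums])
    then show ?thesis using TU_sums[of t q "4/3 - 2*q/15" "8/15 - 512* s"] by (simp add: sums_iff)
  qed
  have r': "128/pi^4 = 128*r" and s': "512/pi^6 = 512* s" unfolding r_def s_def by simp_all
  show ?thesis
    unfolding tanh_def r' s' q_def[symmetric]
  proof
    show "(q + (4 - q/3) * t^2 - (4/3 - 128*r) * t^4) / (q + 4*t^2) < sinh t / cosh t / t"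
    proof -
      have "(q + (4 - q/3) * t^2 - (4/3 - 128*r) * t^4) * (cosh t * t) < sinh t * (q + 4*t^2)"
        using HL by (simp add: algebra_simps power2_eq_square power3_eq_cube power4_eq_xxxx numeral_eq_Suc)
      then show ?thesis using D ch t unfolding q_def by (simp add: field_simps)
    qed
    show "sinh t / cosh t / t < (q + (4 - q/3) * t^2 - (4/3 - 2*q/15) * t^4 + (8/15 - 512* s) * t^6) / (q + 4*t^2)"
    proof -
      have "sinh t * (q + 4*t^2) < (q + (4 - q/3) * t^2 - (4/3 - 2*q/15) * t^4 + (8/15 - 512* s) * t^6) * (cosh t * t)"
        using HU by (simp add: algebra_simps power2_eq_square power3_eq_cube power4_eq_xxxx numeral_eq_Suc)
      then show ?thesis using D ch t unfolding q_def by (simp add: field_simps)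
    qed
  qed
qed

theorem mainTheorem16:
  fixes t :: real
  assumes "t \<noteq> 0"
  shows "(pi^2 + (4 - pi^2/3) * t^2 - (4/3 - 128/pi^4) * t^4) / (pi^2 + 4*t^2) < tanh t / t
       \<and> tanh t / t < (pi^2 + (4 - pi^2/3) * t^2 - (4/3 - 2*pi^2/15) * t^4 + (8/15 - 512/pi^6) * t^6) / (pi^2 + 4*t^2)"
proof (cases "t > 0")
  case True
  then show ?thesis by (rule main_pos)
next
  case False
  with assms have "-t > 0" by simp
  from main_pos[OF this] show ?thesis by simp
qed

end
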